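(* Let $n$ be an odd positive integer having a unique prime divisor $p'$ with $v_{p'}(n)=2$, such that $v_q(n)=1$ for every prime divisor $q\neq p'$ of $n$, and let $A=S(n)$. Let $S=(x_1,\ldots,x_l)$ be a sequence in $\mathbb{Z}_n$ such that for every prime divisor $p$ of $n$, at least two terms of $S$ are coprime to $p$. Let $n'=n/p'^{\,2}$ and let $S'$ be the image of $S$ under the natural map $\mathbb{Z}_n\to\mathbb{Z}_{n'}$. Suppose at most one term of $S'$ is a unit. Then $S$ is an $A$-weighted zero-sum sequence.
   Context: $\mathbb{Z}_m$ is the integers mod $m$, $U(m)$ its unit group; $v_p(n)=r$ means $p^r\mid n$, $p^{r+1}\nmid n$. For $A\subseteq\mathbb{Z}_n$, a sequence $(x_1,\ldots,x_l)$ is an $A$-weighted zero-sum sequence if there exist $a_i\in A$ with $\sum a_ix_i=0$. For odd $m=\prod p_i^{r_i}$ and $a\in U(m)$, $\left(\frac{a}{m}\right)=\prod\left(\frac{a}{p_i}\right)^{r_i}$ (Legendre symbols of images mod $p_i$), and $S(m)$ is the kernel of $a\mapsto\left(\frac{a}{m}\right)$ on $U(m)$. *)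

theory Defs
  imports "HOL-Number_Theory.Number_Theory"
begin

text \<open>Elements of Z_m are represented by integers in {0..<m}.\<close>

definition units_mod :: "nat \<Rightarrow> int set" where
  "units_mod m = {a \<in> {0..<int m}. coprime a (int m)}"

definition jacobi_sym :: "int \<Rightarrow> nat \<Rightarrow> int" where
  "jacobi_sym a m = (\<Prod>p\<in>prime_factors m. Legendre a (int p) ^ multiplicity p m)"

definition S_ker :: "nat \<Rightarrow> int set" where
  "S_ker m = {a \<in> units_mod m. jacobi_sym a m = 1}"

definition weighted_zero_sum :: "nat \<Rightarrow> int set \<Rightarrow> int list \<Rightarrow> bool" where
  "weighted_zero_sum n A xs \<longleftrightarrow>
     (\<exists>a :: nat \<Rightarrow> int. (\<forall>i<length xs. a i \<in> A) \<and>
        [(\<Sum>i<length xs. a i * xs ! i) = 0] (mod int n))"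

end

theory Submission
  imports Defs
begin


lemma Legendre_cong:
  assumes "[a = b] (mod p)" shows "Legendre a p = Legendre b p"
proof -
  have "[a = 0] (mod p) \<longleftrightarrow> [b = 0] (mod p)"
    using assms by (metis cong_sym cong_trans)
  moreover have "QuadRes p a \<longleftrightarrow> QuadRes p b" unfolding QuadRes_def
    using assms by (metis cong_sym cong_trans)
  ultimately show ?thesis unfolding Legendre_def by simp
qed

lemma Legendre_unit:
  assumes "prime (p::nat)" "coprime a (int p)" shows "Legendre a (int p) \<in> {1,-1}"
proof -
  have "\<not> [a = 0] (mod int p)"
  proof
    assume "[a = 0] (mod int p)"
    then have d: "int p dvd a" by (simp only: cong_0_iff)
    have "is_unit (int p)" by (rule coprime_common_divisor[OF assms(2) d dvd_refl])
    then show False using assms(1) by auto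
  qed
  then show ?thesis unfolding Legendre_def by auto
qed


lemma nonres_exists:
  assumes "prime (q::nat)" "odd q" shows "\<exists>g::int. Legendre g (int q) = -1"
proof -
  obtain g where g: "\<forall>k>0. residue_primroot (q ^ k) g"
    using residue_primroot_odd_prime_power_exists assms by blast
  then have r: "residue_primroot q g" using g[rule_format, of 1] by simp
  then have cop: "coprime q g" and o: "ord q g = totient q" by (auto simp: residue_primroot_def)
  have tq: "totient q = q - 1" using assms totient_prime by blast
  have q3: "q \<ge> 3" proof -
    have "q \<noteq> 2" using assms(2) by auto
    then show ?thesis using prime_ge_2_nat[OF assms(1)] by linarith
  qed
  have cop2: "coprime (int g) (int q)" using cop by (simp add: coprime_commute)
  have L: "Legendre (int g) (int q) \<in> {1,-1}" using Legendre_unit[OF assms(1) cop2] .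
  have "Legendre (int g) (int q) \<noteq> 1"
  proof
    assume "Legendre (int g) (int q) = 1"
    moreover have "[Legendre (int g) (int q) = int g ^ ((q - 1) div 2)] (mod int q)"
      by (rule euler_criterion) (use assms q3 in auto)
    ultimately have "[1 = int g ^ ((q - 1) div 2)] (mod int q)" by simp
    then have "[int (g ^ ((q - 1) div 2)) = int 1] (mod int q)"
      by (simp add: cong_sym)
    then have "[g ^ ((q - 1) div 2) = 1] (mod q)" by (simp only: cong_int_iff)
    moreover have "0 < (q - 1) div 2" using q3 by simp
    moreover have "(q - 1) div 2 < ord q g" unfolding o tq using q3 by simp
    ultimately show False using ord_minimal by blast
  qed
  then show ?thesis using L by blast
qed



lemma cop_prime_int:
  assumes "prime (p::nat)" shows "coprime a (int p) \<longleftrightarrow> \<not> int p dvd a"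
  by (rule residues_prime.p_coprime_right_int) (simp add: residues_prime_def assms)

lemma core2:
  fixes p k :: nat and t y :: int
  assumes p: "prime p" and k: "k > 0" and t: "coprime t (int p)" and y: "coprime y (int p)"
  shows "\<exists>c. coprime c (int p) \<and> (int p)^k dvd t + c*y"
proof -
  have "coprime y (int p ^ k)" using y by (simp add: coprime_power_right_iff)
  then obtain z where z: "[y*z = 1] (mod int p ^ k)" using cong_solve_coprime_int by blast
  define c where "c = -t*z"
  have e: "t + c*y = t + (-t)*(y*z)" by (simp add: c_def algebra_simps)
  have "[t + (-t)*(y*z) = t + (-t)*1] (mod int p ^ k)"
    by (intro cong_add cong_mult cong_refl z)
  then have "[t + c*y = 0] (mod int p ^ k)" using e by simp
  then have d: "(int p)^k dvd t + c*y" by (simp only: cong_0_iff)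
  have "coprime (1::int) (int p ^ k)" by simp
  then have "coprime (y*z) (int p ^ k)" using cong_imp_coprime[OF cong_sym[OF z]] by blast
  then have "coprime z (int p ^ k)" by (simp only: coprime_mult_left_iff)
  then have "coprime z (int p)" using k by (simp add: coprime_power_right_iff)
  then have "coprime c (int p)" using t by (simp add: c_def coprime_mult_left_iff coprime_minus_left_iff)
  with d show ?thesis by blast
qed

lemma core1:
  fixes p k :: nat and s y y' :: int
  assumes p: "prime p" "odd p" and k: "k > 0" and y: "coprime y (int p)" and y': "coprime y' (int p)"
  shows "\<exists>c c'. coprime c (int p) \<and> coprime c' (int p) \<and> (int p)^k dvd s + c*y + c'*y'"
proof (cases "coprime (s + y') (int p)")
  case True
  obtain c where c: "coprime c (int p)" "(int p)^k dvd (s + y') + c*y"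
    using core2[OF p(1) k True y] by blast
  have "s + c*y + 1*y' = (s + y') + c*y" by simp
  moreover have "coprime (1::int) (int p)" by simp
  ultimately show ?thesis using c by metis
next
  case False
  then have d1: "int p dvd s + y'" using cop_prime_int[OF p(1)] by blast
  have "coprime (s + 2*y') (int p)"
  proof (rule ccontr)
    assume "\<not> coprime (s + 2*y') (int p)"
    then have "int p dvd s + 2*y'" using cop_prime_int[OF p(1)] by blast
    then have "int p dvd (s + 2*y') - (s + y')" using d1 by (rule dvd_diff)
    then have "int p dvd y'" by simp
    then show False using y' cop_prime_int[OF p(1)] by blast
  qed
  then obtain c where c: "coprime c (int p)" "(int p)^k dvd (s + 2*y') + c*y"
    using core2[OF p(1) k _ y] by blast
  have "s + c*y + 2*y' = (s + 2*y') + c*y" by simp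
  moreover have "coprime (2::int) (int p)" using p(2)
    by (simp add: coprime_commute)
  ultimately show ?thesis using c by metis
qed


lemma solve:
  fixes p k l :: nat and x :: "nat \<Rightarrow> int" and F :: "nat set"
  assumes p: "prime p" "odd p" and k: "k > 0"
    and F: "F \<subseteq> {..<l}" "card F \<le> 1" "\<forall>i\<in>F. coprime (x i) (int p)"
    and J: "card {i. i < l \<and> coprime (x i) (int p)} \<ge> 2" and Fk: "F = {} \<or> k = 1"
  shows "\<exists>u. (\<forall>i<l. coprime (u i) (int p)) \<and> (int p)^k dvd (\<Sum>i<l. u i * x i) \<and> (\<forall>i\<in>F. u i = 1)"
proof -
  define J where "J = {i. i < l \<and> coprime (x i) (int p)}"
  have finJ: "finite J" by (simp add: J_def)
  have finF: "finite F" using F(1) finite_subset by blast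
  have sub: "J \<subseteq> (J - F) \<union> F" by blast
  have "card J \<le> card ((J - F) \<union> F)" by (rule card_mono) (use finJ finF sub in auto)
  also have "\<dots> \<le> card (J - F) + card F" by (rule card_Un_le)
  finally have "card (J - F) \<ge> 1" using J F(2) unfolding J_def by linarith
  then have "J - F \<noteq> {}" by (metis card.empty not_one_le_zero)
  then obtain j where j: "j \<in> J - F" by blast
  have jl: "j < l" and jc: "coprime (x j) (int p)" using j by (auto simp: J_def)
  show ?thesis
  proof (cases "\<exists>j'. j' \<in> J - F \<and> j' \<noteq> j")
    case True
    then obtain j' where j': "j' \<in> J - F" "j' \<noteq> j" by blast
    have jl': "j' < l" and jc': "coprime (x j') (int p)" using j' by (auto simp: J_def)
    define s where "s = (\<Sum>i\<in>{..<l} - {j} - {j'}. x i)"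
    obtain c c' where cc: "coprime c (int p)" "coprime c' (int p)"
      "(int p)^k dvd s + c * x j + c' * x j'"
      using core1[OF p k jc jc', of s] by blast
    define u where "u = (\<lambda>i. if i = j then c else if i = j' then c' else 1)"
    have "(\<Sum>i<l. u i * x i) = u j * x j + (\<Sum>i\<in>{..<l} - {j}. u i * x i)"
      by (rule sum.remove) (use jl in auto)
    also have "(\<Sum>i\<in>{..<l} - {j}. u i * x i) = u j' * x j' + (\<Sum>i\<in>{..<l} - {j} - {j'}. u i * x i)"
      by (rule sum.remove) (use jl' j' in auto)
    also have "(\<Sum>i\<in>{..<l} - {j} - {j'}. u i * x i) = s" unfolding s_def
      by (rule sum.cong) (auto simp: u_def)
    finally have "(\<Sum>i<l. u i * x i) = s + c * x j + c' * x j'" using j' by (simp add: u_def)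
    moreover have "\<forall>i<l. coprime (u i) (int p)" using cc by (simp add: u_def)
    moreover have "\<forall>i\<in>F. u i = 1" using j j' by (auto simp: u_def)
    ultimately show ?thesis using cc(3) by metis
  next
    case False
    then have JF: "J - F = {j}" using j by blast
    have Fne: "F \<noteq> {}"
    proof
      assume "F = {}"
      then have "J = {j}" using JF by simp
      then show False using J unfolding J_def by simp
    qed
    then have k1: "k = 1" using Fk by blast
    have "card F = 1" using Fne finF F(2) by (metis card_0_eq le_antisym less_one not_le)
    then obtain i0 where i0: "F = {i0}" by (rule card_1_singletonE)
    have i0l: "i0 < l" and i0c: "coprime (x i0) (int p)" using i0 F by auto
    have i0j: "i0 \<noteq> j" using j i0 by auto
    have Jsub: "J \<subseteq> {j, i0}" using JF i0 by blast
    define r where "r = (\<Sum>i\<in>{..<l} - {j} - {i0}. x i)"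
    define t where "t = (\<Sum>i\<in>{..<l} - {j}. x i)"
    have t: "t = x i0 + r" unfolding t_def r_def
      by (rule sum.remove) (use i0l i0j in auto)
    have "int p dvd r" unfolding r_def
    proof (rule dvd_sum)
      fix i assume "i \<in> {..<l} - {j} - {i0}"
      then have "i < l" "i \<notin> J" using Jsub by auto
      then have "\<not> coprime (x i) (int p)" by (simp add: J_def)
      then show "int p dvd x i" using cop_prime_int[OF p(1)] by blast
    qed
    have tc: "coprime t (int p)"
    proof (rule ccontr)
      assume "\<not> coprime t (int p)"
      then have "int p dvd t" using cop_prime_int[OF p(1)] by blast
      then have "int p dvd t - r" using \<open>int p dvd r\<close> by (rule dvd_diff)
      then have "int p dvd x i0" using t by simp
      then show False using i0c cop_prime_int[OF p(1)] by blast
    qed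
    obtain c where c: "coprime c (int p)" "(int p)^k dvd t + c * x j"
      using core2[OF p(1) k tc jc] by blast
    define u where "u = (\<lambda>i. if i = j then c else 1)"
    have "(\<Sum>i<l. u i * x i) = u j * x j + (\<Sum>i\<in>{..<l} - {j}. u i * x i)"
      by (rule sum.remove) (use jl in auto)
    also have "(\<Sum>i\<in>{..<l} - {j}. u i * x i) = t" unfolding t_def
      by (rule sum.cong) (auto simp: u_def)
    finally have "(\<Sum>i<l. u i * x i) = t + c * x j" by (simp add: u_def)
    moreover have "\<forall>i<l. coprime (u i) (int p)" using c by (simp add: u_def)
    moreover have "\<forall>i\<in>F. u i = 1" using i0 i0j by (auto simp: u_def)
    ultimately show ?thesis using c(2) by metis
  qed
qed


lemma prod_dvd_pairwise:
  fixes f :: "'a \<Rightarrow> int"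
  assumes "finite A" "\<forall>a\<in>A. \<forall>b\<in>A. a \<noteq> b \<longrightarrow> coprime (f a) (f b)" "\<forall>a\<in>A. f a dvd s"
  shows "prod f A dvd s"
  using assms
proof (induction A rule: finite_induct)
  case empty
  then show ?case by simp
next
  case (insert a A)
  have "coprime (f a) (prod f A)"
    by (rule prod_coprime_right) (use insert in auto)
  moreover have "prod f A dvd s" using insert by auto
  moreover have "f a dvd s" using insert by auto
  ultimately have "f a * prod f A dvd s" by (intro divides_mult)
  then show ?case using insert by simp
qed

lemma int_factorization:
  assumes "n > 0" shows "int n = (\<Prod>p\<in>prime_factors n. int p ^ multiplicity p n)"
proof -
  have "n = (\<Prod>p\<in>prime_factors n. p ^ multiplicity p n)" using prime_factorization_nat assms by blast
  then have "int n = int (\<Prod>p\<in>prime_factors n. p ^ multiplicity p n)" by simp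
  also have "\<dots> = (\<Prod>p\<in>prime_factors n. int p ^ multiplicity p n)" by (simp add: of_nat_prod)
  finally show ?thesis .
qed

lemma dvd_from_pp:
  assumes "n > 0" "\<forall>p\<in>prime_factors n. int p ^ multiplicity p n dvd s"
  shows "int n dvd s"
proof -
  have "(\<Prod>p\<in>prime_factors n. int p ^ multiplicity p n) dvd s"
  proof (rule prod_dvd_pairwise)
    show "finite (prime_factors n)" by simp
    show "\<forall>a\<in>prime_factors n. \<forall>b\<in>prime_factors n. a \<noteq> b \<longrightarrow>
      coprime (int a ^ multiplicity a n) (int b ^ multiplicity b n)"
    proof (intro ballI impI)
      fix a b assume ab: "a \<in> prime_factors n" "b \<in> prime_factors n" "a \<noteq> b"
      then have "coprime a b" by (intro primes_coprime) auto
      then have "coprime (int a) (int b)" by (simp add: coprime_int_iff)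
      then show "coprime (int a ^ multiplicity a n) (int b ^ multiplicity b n)"
        by (simp add: coprime_power_left_iff coprime_power_right_iff)
    qed
    show "\<forall>a\<in>prime_factors n. int a ^ multiplicity a n dvd s" using assms(2) .
  qed
  then show ?thesis using int_factorization[OF assms(1)] by simp
qed

lemma coprime_from_pf:
  assumes "n > 0" "\<forall>p\<in>prime_factors n. coprime a (int p)"
  shows "coprime a (int n)"
proof -
  have "coprime a (\<Prod>p\<in>prime_factors n. int p ^ multiplicity p n)"
    by (rule prod_coprime_right) (use assms(2) in \<open>simp add: coprime_power_right_iff\<close>)
  then show ?thesis using int_factorization[OF assms(1)] by simp
qed

lemma Legendre_one:
  assumes "prime (q::nat)" shows "Legendre 1 (int q) = 1"
proof -
  have "\<not> [1 = 0] (mod int q)"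
  proof
    assume "[1 = 0] (mod int q)"
    then have "int q dvd 1" by (simp only: cong_0_iff)
    then show False using assms by simp
  qed
  moreover have "QuadRes (int q) 1" unfolding QuadRes_def by (rule exI[of _ 1]) simp
  ultimately show ?thesis unfolding Legendre_def by simp
qed


declare in_prime_factors_iff[simp]

lemma Legendre_nz_coprime:
  assumes "prime (q::nat)" "Legendre a (int q) \<noteq> 0" shows "coprime a (int q)"
proof (rule ccontr)
  assume "\<not> coprime a (int q)"
  then have "int q dvd a" using cop_prime_int[OF assms(1)] by blast
  then have "[a = 0] (mod int q)" by (simp only: cong_0_iff)
  then show False using assms(2) unfolding Legendre_def by simp
qed

theorem lemma4p3:
  fixes n p' :: nat and xs :: "int list"
  assumes "n > 0" and "odd n"
    and "prime p'" and "multiplicity p' n = 2"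
    and "\<forall>q. prime q \<and> q dvd n \<and> q \<noteq> p' \<longrightarrow> multiplicity q n = 1"
    and "\<forall>x\<in>set xs. x \<in> {0..<int n}"
    and "\<forall>p. prime p \<and> p dvd n \<longrightarrow>
           card {i. i < length xs \<and> coprime (xs ! i) (int p)} \<ge> 2"
    and "card {i. i < length xs \<and>
           coprime ((xs ! i) mod int (n div p'^2)) (int (n div p'^2))} \<le> 1"
  shows "weighted_zero_sum n (S_ker n) xs"
proof -
  define l where "l = length xs"
  define x where "x = (\<lambda>i. xs ! i)"
  define n' where "n' = n div p'^2"
  define Q where "Q = prime_factors n - {p'}"
  define U where "U = {i. i < l \<and> coprime (x i mod int n') (int n')}"
  have n0: "n \<noteq> 0" using assms(1) by simp
  have p'2: "p'^2 dvd n" using multiplicity_dvd[of p' n] assms(4) by simp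
  have n_eq: "n = p'^2 * n'" using p'2 unfolding n'_def by (metis dvd_mult_div_cancel)
  have n'0: "n' \<noteq> 0" using n_eq n0 by auto
  have p'n': "\<not> p' dvd n'"
  proof
    assume "p' dvd n'"
    then have "p'^2 * p' dvd p'^2 * n'" by simp
    then have "p'^3 dvd n" using n_eq by (simp add: power2_eq_square power3_eq_cube)
    have "3 \<le> multiplicity p' n"
      by (rule multiplicity_geI[OF n0 _ \<open>p'^3 dvd n\<close>]) (use assms(3) in auto)
    then show False using assms(4) by simp
  qed
  have p'dvd: "p' dvd n" using p'2 dvd_trans[of p' "p'^2" n] by simp
  have oddp': "odd p'" using p'dvd assms(2) dvd_trans by blast
  have p'pf: "p' \<in> prime_factors n" using p'dvd n0 assms(3) by auto
  have pfQ: "prime_factors n = insert p' Q" unfolding Q_def using p'pf by blast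
  have p'Q: "p' \<notin> Q" unfolding Q_def by simp
  have finQ: "finite Q" unfolding Q_def by simp
  have Qprops: "prime q \<and> q dvd n \<and> q \<noteq> p' \<and> multiplicity q n = 1 \<and> odd q \<and> q dvd n'"
    if "q \<in> Q" for q
  proof -
    have q: "prime q" "q dvd n" "q \<noteq> p'" using that n0 unfolding Q_def by auto
    have m: "multiplicity q n = 1" using assms(5) q by blast
    have o: "odd q" using q(2) assms(2) dvd_trans by blast
    have "\<not> q dvd p'^2"
    proof
      assume "q dvd p'^2"
      then have "q dvd p'" using prime_dvd_power q(1) by blast
      then show False using primes_dvd_imp_eq[OF q(1) assms(3)] q(3) by blast
    qed
    then have "q dvd n'" using q(1,2) n_eq prime_dvd_mult_iff by metis
    then show ?thesis using q m o by blast
  qed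
  have cardU: "card U \<le> 1" using assms(8) unfolding U_def x_def l_def n'_def by simp
  have Ul: "U \<subseteq> {..<l}" unfolding U_def by auto
  have Ucop: "coprime (x i) (int q)" if "i \<in> U" "q \<in> Q" for i q
  proof -
    have "coprime (x i mod int n') (int n')" using that(1) unfolding U_def by simp
    then have c: "coprime (x i) (int n')" using n'0 by (simp add: coprime_mod_left_iff)
    have "int q dvd int n'" using Qprops[OF that(2)] by simp
    show ?thesis
    proof (rule ccontr)
      assume "\<not> coprime (x i) (int q)"
      then have "int q dvd x i" using cop_prime_int Qprops[OF that(2)] by blast
      then have "is_unit (int q)" using coprime_common_divisor[OF c _ \<open>int q dvd int n'\<close>] by blast
      then show False using Qprops[OF that(2)] by simp
    qed
  qed
  have notU: "\<exists>q\<in>Q. int q dvd x i" if "i < l" "i \<notin> U" for i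
  proof (rule ccontr)
    assume H: "\<not> (\<exists>q\<in>Q. int q dvd x i)"
    have "coprime (x i) (int n')"
    proof (rule coprime_from_pf)
      show "n' > 0" using n'0 by simp
      show "\<forall>p\<in>prime_factors n'. coprime (x i) (int p)"
      proof
        fix p assume p: "p \<in> prime_factors n'"
        then have pp: "prime p" "p dvd n'" using n'0 by auto
        then have "p dvd n" using n_eq by simp
        moreover have "p \<noteq> p'" using pp p'n' by blast
        ultimately have "p \<in> Q" unfolding Q_def using pp n0 by auto
        then have "\<not> int p dvd x i" using H by blast
        then show "coprime (x i) (int p)" using cop_prime_int[OF pp(1)] by blast
      qed
    qed
    then have "coprime (x i mod int n') (int n')" using n'0 by (simp add: coprime_mod_left_iff)
    then show False using that unfolding U_def by simp
  qed
  have "\<forall>q\<in>Q. \<exists>u. (\<forall>i<l. coprime (u i) (int q)) \<and> (int q)^1 dvd (\<Sum>i<l. u i * x i) \<and> (\<forall>i\<in>U. u i = 1)"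
  proof
    fix q assume q: "q \<in> Q"
    show "\<exists>u. (\<forall>i<l. coprime (u i) (int q)) \<and> (int q)^1 dvd (\<Sum>i<l. u i * x i) \<and> (\<forall>i\<in>U. u i = 1)"
    proof (rule solve)
      show "prime q" "odd q" using Qprops[OF q] by auto
      show "(0::nat) < 1" by simp
      show "U \<subseteq> {..<l}" by (rule Ul)
      show "card U \<le> 1" by (rule cardU)
      show "\<forall>i\<in>U. coprime (x i) (int q)" using Ucop q by blast
      show "2 \<le> card {i. i < l \<and> coprime (x i) (int q)}"
        using assms(7) Qprops[OF q] unfolding l_def x_def by blast
      show "U = {} \<or> (1::nat) = 1" by simp
    qed
  qed
  then obtain u where u: "\<forall>q\<in>Q. (\<forall>i<l. coprime (u q i) (int q)) \<and> (int q)^1 dvd (\<Sum>i<l. u q i * x i) \<and> (\<forall>i\<in>U. u q i = 1)"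
    by (metis bchoice)
  obtain v where v: "(\<forall>i<l. coprime (v i) (int p')) \<and> (int p')^2 dvd (\<Sum>i<l. v i * x i) \<and> (\<forall>i\<in>{}. v i = 1)"
  proof -
    have "\<exists>v. (\<forall>i<l. coprime (v i) (int p')) \<and> (int p')^2 dvd (\<Sum>i<l. v i * x i) \<and> (\<forall>i\<in>{}. v i = 1)"
    proof (rule solve)
      show "prime p'" "odd p'" using assms(3) oddp' by auto
      show "(0::nat) < 2" by simp
      show "{} \<subseteq> {..<l}" "card {} \<le> 1" "\<forall>i\<in>{}. coprime (x i) (int p')" by auto
      show "2 \<le> card {i. i < l \<and> coprime (x i) (int p')}"
        using assms(7) assms(3) p'dvd unfolding l_def x_def by blast
      show "{} = {} \<or> (2::nat) = 1" by simp
    qed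
    then show ?thesis using that by blast
  qed
  have "\<forall>q\<in>Q. \<exists>g. Legendre g (int q) = -1" using nonres_exists Qprops by blast
  then obtain \<nu> where \<nu>: "\<forall>q\<in>Q. Legendre (\<nu> q) (int q) = -1" by (metis bchoice)
  define d where "d i = (SOME q. q \<in> Q \<and> int q dvd x i)" for i
  have dprop: "d i \<in> Q \<and> int (d i) dvd x i" if "i < l" "i \<notin> U" for i
    unfolding d_def using notU[OF that] by (metis (mono_tags, lifting) someI_ex)
  define R where "R i = (\<Prod>q\<in>Q-{d i}. Legendre (u q i) (int q))" for i
  define w where "w q i = (if i \<notin> U \<and> q = d i then (if R i = 1 then 1 else \<nu> q) else u q i)" for q i
  have wcop: "coprime (w q i) (int q)" if "q \<in> Q" "i < l" for q i
  proof -
    have "coprime (\<nu> q) (int q)" using Legendre_nz_coprime[of q "\<nu> q"] \<nu> that Qprops by simp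
    moreover have "coprime (u q i) (int q)" using u that by blast
    ultimately show ?thesis unfolding w_def by auto
  qed
  have wsum: "int q dvd (\<Sum>i<l. w q i * x i)" if q: "q \<in> Q" for q
  proof -
    have "[(\<Sum>i<l. w q i * x i) = (\<Sum>i<l. u q i * x i)] (mod int q)"
    proof (rule cong_sum)
      fix i assume i: "i \<in> {..<l}"
      show "[w q i * x i = u q i * x i] (mod int q)"
      proof (cases "i \<notin> U \<and> q = d i")
        case True
        then have "int q dvd x i" using dprop i by auto
        then have "int q dvd (w q i - u q i) * x i" by simp
        then show ?thesis by (simp add: cong_iff_dvd_diff algebra_simps)
      next
        case False
        then have "w q i = u q i" unfolding w_def by auto
        then show ?thesis by simp
      qed
    qed
    moreover have "int q dvd (\<Sum>i<l. u q i * x i)" using u q by simp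
    ultimately show ?thesis using cong_dvd_iff[of _ _ "int q"] by blast
  qed
  define W where "W p i = (if p = p' then v i else w p i)" for p i
  define M where "M p = p ^ multiplicity p n" for p
  have WM: "(\<forall>i<l. coprime (W p i) (int p)) \<and> int (M p) dvd (\<Sum>i<l. W p i * x i) \<and> int p dvd int (M p)"
    if p: "p \<in> prime_factors n" for p
  proof (cases "p = p'")
    case True
    then show ?thesis using v assms(4) unfolding W_def M_def by simp
  next
    case False
    then have q: "p \<in> Q" using p unfolding Q_def by simp
    then show ?thesis using wcop wsum Qprops[OF q] False unfolding W_def M_def by simp
  qed
  have Mdvd: "M p dvd n" for p unfolding M_def by (rule multiplicity_dvd)
  have "\<forall>i. \<exists>A. \<forall>p\<in>prime_factors n. [A = nat (W p i mod int (M p))] (mod M p)"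
  proof
    fix i
    show "\<exists>A. \<forall>p\<in>prime_factors n. [A = nat (W p i mod int (M p))] (mod M p)"
    proof (rule chinese_remainder_nat)
      show "finite (prime_factors n)" by simp
      show "\<forall>a\<in>prime_factors n. \<forall>b\<in>prime_factors n. a \<noteq> b \<longrightarrow> coprime (M a) (M b)"
      proof (intro ballI impI)
        fix a b assume ab: "a \<in> prime_factors n" "b \<in> prime_factors n" "a \<noteq> b"
        then have "coprime a b" by (intro primes_coprime) auto
        then show "coprime (M a) (M b)" unfolding M_def
          by (simp add: coprime_power_left_iff coprime_power_right_iff)
      qed
    qed
  qed
  then obtain A where A: "\<forall>i. \<forall>p\<in>prime_factors n. [A i = nat (W p i mod int (M p))] (mod M p)"
    by (metis choice)
  define a where "a i = int (A i mod n)" for i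
  have acong: "[a i = W p i] (mod int (M p))" if p: "p \<in> prime_factors n" for p i
  proof -
    have Mpos: "M p > 0" unfolding M_def using p by auto
    have c0: "[A i mod n = A i] (mod n)" by (simp add: cong_def)
    have c1: "[A i mod n = A i] (mod M p)" using cong_dvd_modulus_nat[OF c0 Mdvd[of p]] .
    have Ai: "[A i = nat (W p i mod int (M p))] (mod M p)" using A p by blast
    have "[A i mod n = nat (W p i mod int (M p))] (mod M p)" by (rule cong_trans[OF c1 Ai])
    then have "[int (A i mod n) = int (nat (W p i mod int (M p)))] (mod int (M p))"
      unfolding cong_int_iff .
    moreover have "int (nat (W p i mod int (M p))) = W p i mod int (M p)" using Mpos by simp
    moreover have "[W p i mod int (M p) = W p i] (mod int (M p))" by (simp add: cong_def)
    ultimately show ?thesis unfolding a_def by (metis cong_trans)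
  qed
  have acop: "coprime (a i) (int p)" if p: "p \<in> prime_factors n" and i: "i < l" for p i
  proof -
    have "int p dvd int (M p)" using WM[OF p] by blast
    then have "[a i = W p i] (mod int p)" by (rule cong_dvd_modulus[OF acong[OF p]])
    moreover have "coprime (W p i) (int p)" using WM[OF p] i by blast
    ultimately show ?thesis using cong_imp_coprime[OF cong_sym] by blast
  qed
  have aunit: "a i \<in> units_mod n" if i: "i < l" for i
  proof -
    have "coprime (a i) (int n)" using coprime_from_pf[of n "a i"] acop i assms(1) by blast
    moreover have "0 \<le> a i" "a i < int n" using assms(1) unfolding a_def by auto
    ultimately show ?thesis unfolding units_mod_def by auto
  qed
  have ajac: "jacobi_sym (a i) n = 1" if i: "i < l" for i
  proof -
    have "jacobi_sym (a i) n = Legendre (a i) (int p') ^ multiplicity p' n *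
        (\<Prod>q\<in>Q. Legendre (a i) (int q) ^ multiplicity q n)"
      unfolding jacobi_sym_def pfQ using finQ p'Q by simp
    also have "Legendre (a i) (int p') ^ multiplicity p' n = 1"
    proof -
      have "Legendre (a i) (int p') \<in> {1,-1}" using Legendre_unit assms(3) acop p'pf i by blast
      then show ?thesis using assms(4) by auto
    qed
    also have "(\<Prod>q\<in>Q. Legendre (a i) (int q) ^ multiplicity q n) = (\<Prod>q\<in>Q. Legendre (w q i) (int q))"
    proof (rule prod.cong)
      fix q assume q: "q \<in> Q"
      have qp: "q \<in> prime_factors n" "q \<noteq> p'" using q unfolding Q_def by auto
      have "int q dvd int (M q)" using WM[OF qp(1)] by blast
      then have "[a i = W q i] (mod int q)" by (rule cong_dvd_modulus[OF acong[OF qp(1)]])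
      then have "Legendre (a i) (int q) = Legendre (w q i) (int q)" using qp unfolding W_def
        by (simp add: Legendre_cong)
      then show "Legendre (a i) (int q) ^ multiplicity q n = Legendre (w q i) (int q)"
        using Qprops[OF q] by simp
    qed simp
    also have "(\<Prod>q\<in>Q. Legendre (w q i) (int q)) = 1"
    proof (cases "i \<in> U")
      case True
      have "(\<Prod>q\<in>Q. Legendre (w q i) (int q)) = (\<Prod>q\<in>Q. 1)"
      proof (rule prod.cong)
        fix q assume q: "q \<in> Q"
        have "w q i = 1" using True u q unfolding w_def by simp
        then show "Legendre (w q i) (int q) = 1" using Legendre_one Qprops[OF q] by simp
      qed simp
      then show ?thesis by simp
    next
      case False
      have di: "d i \<in> Q" using dprop[OF i False] by blast
      have "(\<Prod>q\<in>Q. Legendre (w q i) (int q)) = Legendre (w (d i) i) (int (d i)) *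
          (\<Prod>q\<in>Q-{d i}. Legendre (w q i) (int q))"
        by (rule prod.remove) (use finQ di in auto)
      also have "(\<Prod>q\<in>Q-{d i}. Legendre (w q i) (int q)) = R i"
        unfolding R_def by (rule prod.cong) (auto simp: w_def)
      also have "w (d i) i = (if R i = 1 then 1 else \<nu> (d i))" using False unfolding w_def by simp
      finally have e: "(\<Prod>q\<in>Q. Legendre (w q i) (int q)) =
          Legendre (if R i = 1 then 1 else \<nu> (d i)) (int (d i)) * R i" .
      have "\<bar>R i\<bar> = (\<Prod>q\<in>Q-{d i}. \<bar>Legendre (u q i) (int q)\<bar>)" unfolding R_def by (rule abs_prod)
      also have "\<dots> = (\<Prod>q\<in>Q-{d i}. 1)"
      proof (rule prod.cong)
        fix q assume q: "q \<in> Q - {d i}"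
        have "Legendre (u q i) (int q) \<in> {1,-1}" using Legendre_unit Qprops u q i by blast
        then show "\<bar>Legendre (u q i) (int q)\<bar> = 1" by auto
      qed simp
      finally have "\<bar>R i\<bar> = 1" by simp
      then have "R i = 1 \<or> R i = -1" by auto
      then show ?thesis
      proof
        assume "R i = 1"
        then show ?thesis using e Legendre_one Qprops[OF di] by simp
      next
        assume "R i = -1"
        then show ?thesis using e \<nu> di by simp
      qed
    qed
    finally show ?thesis by simp
  qed
  have asum: "int n dvd (\<Sum>i<l. a i * x i)"
  proof (rule dvd_from_pp[OF assms(1)])
    show "\<forall>p\<in>prime_factors n. int p ^ multiplicity p n dvd (\<Sum>i<l. a i * x i)"
    proof
      fix p assume p: "p \<in> prime_factors n"
      have "[(\<Sum>i<l. a i * x i) = (\<Sum>i<l. W p i * x i)] (mod int (M p))"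
        by (rule cong_sum) (intro cong_mult cong_refl acong[OF p])
      moreover have "int (M p) dvd (\<Sum>i<l. W p i * x i)" using WM[OF p] by blast
      ultimately have "int (M p) dvd (\<Sum>i<l. a i * x i)" using cong_dvd_iff by blast
      then show "int p ^ multiplicity p n dvd (\<Sum>i<l. a i * x i)" unfolding M_def by simp
    qed
  qed
  show ?thesis unfolding weighted_zero_sum_def
  proof (intro exI conjI allI impI)
    fix i assume "i < length xs"
    then show "a i \<in> S_ker n" using aunit ajac unfolding S_ker_def l_def by simp
  next
    show "[(\<Sum>i<length xs. a i * xs ! i) = 0] (mod int n)"
      using asum unfolding l_def x_def by (simp add: cong_0_iff)
  qed
qed

end
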